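(* Let $(A,[\cdot,\cdot])$ be an anticommutative algebra over a field $\mathbb K$ of characteristic $0$, i.e. $[x,y]=-[y,x]$ for all $x,y\in A$. Then $A$ is an Acaa-algebra if and only if $[x_1,[x_2,x_1]]=0$ for all $x_1,x_2\in A$.
   Context: An Acaa-algebra over a field $\mathbb K$ of characteristic $0$ is a $\mathbb K$-vector space $A$ with a bilinear product $[\cdot,\cdot]$ which is anticommutative, $[x,y]=-[y,x]$, and satisfies $[x_1,[x_2,x_3]]=[x_2,[x_3,x_1]]$ for all $x_1,x_2,x_3\in A$. *)

theory Defs
  imports Main "HOL.Vector_Spaces"
begin

definition bilinear_product ::
  "('k::field \<Rightarrow> 'v::ab_group_add \<Rightarrow> 'v) \<Rightarrow> ('v \<Rightarrow> 'v \<Rightarrow> 'v) \<Rightarrow> bool" where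
  "bilinear_product scale br \<longleftrightarrow>
     (\<forall>x y z. br (x + y) z = br x z + br y z) \<and>
     (\<forall>x y z. br x (y + z) = br x y + br x z) \<and>
     (\<forall>c x y. br (scale c x) y = scale c (br x y)) \<and>
     (\<forall>c x y. br x (scale c y) = scale c (br x y))"

definition anticommutative :: "('v::ab_group_add \<Rightarrow> 'v \<Rightarrow> 'v) \<Rightarrow> bool" where
  "anticommutative br \<longleftrightarrow> (\<forall>x y. br x y = - br y x)"

definition acaa_algebra ::
  "('k::field \<Rightarrow> 'v::ab_group_add \<Rightarrow> 'v) \<Rightarrow> ('v \<Rightarrow> 'v \<Rightarrow> 'v) \<Rightarrow> bool" where
  "acaa_algebra scale br \<longleftrightarrow>
     vector_space scale \<and> bilinear_product scale br \<and> anticommutative br \<and>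
     (\<forall>x1 x2 x3. br x1 (br x2 x3) = br x2 (br x3 x1))"

end

theory Submission
  imports Defs
begin

theorem mainTheorem1:
  fixes scale :: "'k::field_char_0 \<Rightarrow> 'v::ab_group_add \<Rightarrow> 'v"
    and br :: "'v \<Rightarrow> 'v \<Rightarrow> 'v"
  assumes "vector_space scale"
    and "bilinear_product scale br"
    and "anticommutative br"
  shows "acaa_algebra scale br \<longleftrightarrow> (\<forall>x1 x2. br x1 (br x2 x1) = 0)"
proof -
  interpret vs: vector_space scale by fact
  have addl: "\<And>x y z. br (x + y) z = br x z + br y z"
   and addr: "\<And>x y z. br x (y + z) = br x y + br x z"
    using assms(2) unfolding bilinear_product_def by auto
  have ac: "\<And>x y. br x y = - br y x" using assms(3) unfolding anticommutative_def by blast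
  have r0: "\<And>x. br x 0 = 0"
  proof -
    fix x
    have "br x (0 + 0) = br x 0 + br x 0" by (rule addr)
    hence "br x 0 + br x 0 = br x 0 + 0" by (metis add_0_right)
    thus "br x 0 = 0" by (rule add_left_imp_eq)
  qed
  have rneg: "\<And>x y. br x (- y) = - br x y"
  proof -
    fix x y
    have "br x y + br x (- y) = 0" using addr[of x y "-y"] r0 by simp
    thus "br x (- y) = - br x y" by (simp add: add_eq_0_iff)
  qed
  have xx: "\<And>x. br x x = 0"
  proof -
    fix x
    have "br x x + br x x = 0" using ac[of x x] by (metis add.left_inverse)
    hence "scale 2 (br x x) = 0"
      using vs.scale_left_distrib[of 1 1 "br x x"] by simp
    hence "scale (1/2) (scale 2 (br x x)) = 0" by simp
    thus "br x x = 0" by simp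
  qed
  show ?thesis
  proof
    assume "acaa_algebra scale br"
    hence J: "\<And>a b c. br a (br b c) = br b (br c a)" unfolding acaa_algebra_def by auto
    show "\<forall>x1 x2. br x1 (br x2 x1) = 0"
    proof (intro allI)
      fix a b show "br a (br b a) = 0" using J[of a b a] xx r0 by simp
    qed
  next
    assume h: "\<forall>x1 x2. br x1 (br x2 x1) = 0"
    have lin: "\<And>x y z. br x (br y z) = br z (br x y)"
    proof -
      fix x y z
      have "0 = br (x+z) (br y (x+z))" using h by simp
      also have "\<dots> = br x (br y x) + br x (br y z) + (br z (br y x) + br z (br y z))"
        by (simp add: addl addr)
      also have "\<dots> = br x (br y z) + br z (br y x)" using h by simp
      finally have "br x (br y z) = - br z (br y x)" by (simp add: eq_neg_iff_add_eq_0)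
      also have "\<dots> = br z (br x y)" using ac[of y x] rneg by simp
      finally show "br x (br y z) = br z (br x y)" .
    qed
    have "\<forall>x1 x2 x3. br x1 (br x2 x3) = br x2 (br x3 x1)"
    proof (intro allI)
      fix a b c
      have "br a (br b c) = br c (br a b)" by (rule lin)
      also have "\<dots> = br b (br c a)" by (rule lin)
      finally show "br a (br b c) = br b (br c a)" .
    qed
    thus "acaa_algebra scale br" unfolding acaa_algebra_def using assms by auto
  qed
qed

end
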